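(* Let $B$ be a finite skew brace with $(B,+)$ abelian such that $\Lambda(B)$ has exactly one vertex. Then $B$ is isomorphic to one of: (1) $\mathbb{Z}/4\mathbb{Z}$ with its usual addition and $x\circ y=x+y+2xy$; (2) $\mathbb{Z}/2\mathbb{Z}\times\mathbb{Z}/2\mathbb{Z}$ with componentwise addition and $(x_1,y_1)\circ(x_2,y_2)=(x_1+x_2+y_1y_2,\,y_1+y_2)$; (3) $\mathbb{Z}/2\mathbb{Z}\times\mathbb{Z}/4\mathbb{Z}$ with componentwise addition and $(x_1,y_1)\circ(x_2,y_2)=\big(x_1+x_2+\varepsilon(y_1)y_2,\,y_1+y_2+2y_1y_2\big)$, where $\varepsilon(y_1)=0$ if $y_1\in\{0,1\}$ and $\varepsilon(y_1)=1$ if $y_1\in\{2,3\}$ (i.e. $\varepsilon(y_1)=\sum_{i=1}^{y_1-1}i \bmod 2$ for the representative $y_1\in\{0,1,2,3\}$), and $\varepsilon(y_1)y_2$ is computed in $\mathbb{Z}/2\mathbb{Z}$.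
   Context: A skew brace is a triple $(A,+,\circ)$ where $(A,+)$ and $(A,\circ)$ are groups with $a\circ(b+c)=a\circ b-a+a\circ c$. $\lambda_a(b)=-a+a\circ b$ defines an action of $(A,\circ)$ on $(A,+)$ by automorphisms. $\Lambda(A)$ is the graph whose vertices are the $\lambda$-orbits of size $>1$, two distinct vertices $L_1,L_2$ adjacent iff $\gcd(|L_1|,|L_2|)\ne1$. *)

theory Defs
  imports "HOL-Algebra.Group"
begin

text \<open>A skew brace (A,+,o) is given by two group structures P = (A,+) and M = (A,o)
  on the same carrier (written multiplicatively in HOL-Algebra).\<close>

definition skew_brace :: "'a monoid \<Rightarrow> 'a monoid \<Rightarrow> bool" where
  "skew_brace P M \<longleftrightarrow> group P \<and> group M \<and> carrier P = carrier M \<and>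
     (\<forall>a\<in>carrier P. \<forall>b\<in>carrier P. \<forall>c\<in>carrier P.
        a \<otimes>\<^bsub>M\<^esub> (b \<otimes>\<^bsub>P\<^esub> c)
          = (a \<otimes>\<^bsub>M\<^esub> b) \<otimes>\<^bsub>P\<^esub> inv\<^bsub>P\<^esub> a \<otimes>\<^bsub>P\<^esub> (a \<otimes>\<^bsub>M\<^esub> c))"

definition brace_lambda :: "'a monoid \<Rightarrow> 'a monoid \<Rightarrow> 'a \<Rightarrow> 'a \<Rightarrow> 'a" where
  "brace_lambda P M a b = inv\<^bsub>P\<^esub> a \<otimes>\<^bsub>P\<^esub> (a \<otimes>\<^bsub>M\<^esub> b)"

definition lambda_orbit :: "'a monoid \<Rightarrow> 'a monoid \<Rightarrow> 'a \<Rightarrow> 'a set" where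
  "lambda_orbit P M b = (\<lambda>a. brace_lambda P M a b) ` carrier M"

definition Lambda_vertices :: "'a monoid \<Rightarrow> 'a monoid \<Rightarrow> 'a set set" where
  "Lambda_vertices P M = {L. (\<exists>b\<in>carrier P. L = lambda_orbit P M b) \<and> card L > 1}"

definition Lambda_adj :: "'a monoid \<Rightarrow> 'a monoid \<Rightarrow> 'a set \<Rightarrow> 'a set \<Rightarrow> bool" where
  "Lambda_adj P M L1 L2 \<longleftrightarrow> L1 \<in> Lambda_vertices P M \<and> L2 \<in> Lambda_vertices P M \<and>
     L1 \<noteq> L2 \<and> gcd (card L1) (card L2) \<noteq> 1"

definition brace_iso :: "'a monoid \<Rightarrow> 'a monoid \<Rightarrow> 'b monoid \<Rightarrow> 'b monoid \<Rightarrow> bool" where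
  "brace_iso P M P' M' \<longleftrightarrow> (\<exists>f. bij_betw f (carrier P) (carrier P') \<and>
     (\<forall>x\<in>carrier P. \<forall>y\<in>carrier P.
        f (x \<otimes>\<^bsub>P\<^esub> y) = f x \<otimes>\<^bsub>P'\<^esub> f y \<and> f (x \<otimes>\<^bsub>M\<^esub> y) = f x \<otimes>\<^bsub>M'\<^esub> f y))"

definition B1_add :: "int monoid" where
  "B1_add = \<lparr>carrier = {0..3}, mult = (\<lambda>x y. (x + y) mod 4), one = 0\<rparr>"
definition B1_circ :: "int monoid" where
  "B1_circ = \<lparr>carrier = {0..3}, mult = (\<lambda>x y. (x + y + 2*x*y) mod 4), one = 0\<rparr>"

definition B2_add :: "(int \<times> int) monoid" where
  "B2_add = \<lparr>carrier = {0..1} \<times> {0..1},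
     mult = (\<lambda>(x1,y1) (x2,y2). ((x1 + x2) mod 2, (y1 + y2) mod 2)), one = (0,0)\<rparr>"
definition B2_circ :: "(int \<times> int) monoid" where
  "B2_circ = \<lparr>carrier = {0..1} \<times> {0..1},
     mult = (\<lambda>(x1,y1) (x2,y2). ((x1 + x2 + y1*y2) mod 2, (y1 + y2) mod 2)), one = (0,0)\<rparr>"

definition eps4 :: "int \<Rightarrow> int" where
  "eps4 y = (if y \<in> {2,3} then 1 else 0)"
definition B3_add :: "(int \<times> int) monoid" where
  "B3_add = \<lparr>carrier = {0..1} \<times> {0..3},
     mult = (\<lambda>(x1,y1) (x2,y2). ((x1 + x2) mod 2, (y1 + y2) mod 4)), one = (0,0)\<rparr>"
definition B3_circ :: "(int \<times> int) monoid" where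
  "B3_circ = \<lparr>carrier = {0..1} \<times> {0..3},
     mult = (\<lambda>(x1,y1) (x2,y2). ((x1 + x2 + eps4 y1 * y2) mod 2, (y1 + y2 + 2*y1*y2) mod 4)),
     one = (0,0)\<rparr>"

end

theory Submission
  imports Defs "HOL-Algebra.Coset"
begin

lemma iso_lemma:
  fixes P M :: "'a monoid" and Q Qc :: "'b monoid" and g :: "'b \<Rightarrow> 'a"
  assumes bij: "bij_betw g (carrier Q) (carrier P)"
    and h1: "\<And>p q. p \<in> carrier Q \<Longrightarrow> q \<in> carrier Q \<Longrightarrow>
       p \<otimes>\<^bsub>Q\<^esub> q \<in> carrier Q \<and> g (p \<otimes>\<^bsub>Q\<^esub> q) = g p \<otimes>\<^bsub>P\<^esub> g q"
    and h2: "\<And>p q. p \<in> carrier Q \<Longrightarrow> q \<in> carrier Q \<Longrightarrow>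
       p \<otimes>\<^bsub>Qc\<^esub> q \<in> carrier Q \<and> g (p \<otimes>\<^bsub>Qc\<^esub> q) = g p \<otimes>\<^bsub>M\<^esub> g q"
  shows "brace_iso P M Q Qc"
proof -
  define f where "f = inv_into (carrier Q) g"
  have bf: "bij_betw f (carrier P) (carrier Q)" unfolding f_def using bij by (rule bij_betw_inv_into)
  have inj: "inj_on g (carrier Q)" and img: "g ` carrier Q = carrier P" using bij by (auto simp: bij_betw_def)
  have fQ: "f x \<in> carrier Q" if "x \<in> carrier P" for x
    using that img unfolding f_def by (metis inv_into_into)
  have gf: "g (f x) = x" if "x \<in> carrier P" for x
    using that img unfolding f_def by (metis f_inv_into_f)
  have fg: "f (g p) = p" if "p \<in> carrier Q" for p using inj that by (simp add: f_def inv_into_f_f)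
  have "\<forall>x\<in>carrier P. \<forall>y\<in>carrier P.
        f (x \<otimes>\<^bsub>P\<^esub> y) = f x \<otimes>\<^bsub>Q\<^esub> f y \<and> f (x \<otimes>\<^bsub>M\<^esub> y) = f x \<otimes>\<^bsub>Qc\<^esub> f y"
  proof (intro ballI conjI)
    fix x y assume x: "x \<in> carrier P" and y: "y \<in> carrier P"
    have c1: "f x \<otimes>\<^bsub>Q\<^esub> f y \<in> carrier Q" and e1: "g (f x \<otimes>\<^bsub>Q\<^esub> f y) = x \<otimes>\<^bsub>P\<^esub> y"
      using h1[OF fQ[OF x] fQ[OF y]] gf[OF x] gf[OF y] by auto
    show "f (x \<otimes>\<^bsub>P\<^esub> y) = f x \<otimes>\<^bsub>Q\<^esub> f y" by (subst e1[symmetric]) (rule fg[OF c1])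
    have c2: "f x \<otimes>\<^bsub>Qc\<^esub> f y \<in> carrier Q" and e2: "g (f x \<otimes>\<^bsub>Qc\<^esub> f y) = x \<otimes>\<^bsub>M\<^esub> y"
      using h2[OF fQ[OF x] fQ[OF y]] gf[OF x] gf[OF y] by auto
    show "f (x \<otimes>\<^bsub>M\<^esub> y) = f x \<otimes>\<^bsub>Qc\<^esub> f y" by (subst e2[symmetric]) (rule fg[OF c2])
  qed
  thus ?thesis unfolding brace_iso_def using bf by blast
qed

locale sbr =
  fixes P M :: "'a monoid"
  assumes cgP: "comm_group P" and gM: "group M" and car: "carrier M = carrier P"
    and br: "\<And>a b c. a\<in>carrier P \<Longrightarrow> b\<in>carrier P \<Longrightarrow> c\<in>carrier P \<Longrightarrow>
        a \<otimes>\<^bsub>M\<^esub> (b \<otimes>\<^bsub>P\<^esub> c)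
          = (a \<otimes>\<^bsub>M\<^esub> b) \<otimes>\<^bsub>P\<^esub> inv\<^bsub>P\<^esub> a \<otimes>\<^bsub>P\<^esub> (a \<otimes>\<^bsub>M\<^esub> c)"
    and fin: "finite (carrier P)"
    and V1: "card (Lambda_vertices P M) = 1"
begin

sublocale P: comm_group P by (rule cgP)
sublocale M: group M by (rule gM)

abbreviation A where "A \<equiv> carrier P"
abbreviation pl (infixl "\<oplus>" 65) where "pl x y \<equiv> x \<otimes>\<^bsub>P\<^esub> y"
abbreviation ci (infixl "\<odot>" 70) where "ci x y \<equiv> x \<otimes>\<^bsub>M\<^esub> y"
abbreviation ng ("\<ominus> _" [81] 80) where "ng x \<equiv> inv\<^bsub>P\<^esub> x"
abbreviation zr ("\<zero>") where "zr \<equiv> \<one>\<^bsub>P\<^esub>"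
abbreviation lam where "lam \<equiv> brace_lambda P M"

lemma cancel1: "x \<in> A \<Longrightarrow> y \<in> A \<Longrightarrow> x \<oplus> (\<ominus>x \<oplus> y) = y"
  by (simp add: P.m_assoc[symmetric])
lemma cancel2: "x \<in> A \<Longrightarrow> y \<in> A \<Longrightarrow> \<ominus>x \<oplus> (x \<oplus> y) = y"
  by (simp add: P.m_assoc[symmetric])

lemma ci_closed[simp]: "a \<in> A \<Longrightarrow> b \<in> A \<Longrightarrow> a \<odot> b \<in> A"
  using M.m_closed car by auto

lemma one_eq: "\<one>\<^bsub>M\<^esub> = \<zero>"
proof -
  have o: "\<one>\<^bsub>M\<^esub> \<in> A" using car by auto
  have "\<one>\<^bsub>M\<^esub> \<odot> (\<zero> \<oplus> \<zero>) = (\<one>\<^bsub>M\<^esub> \<odot> \<zero>) \<oplus> \<ominus>\<one>\<^bsub>M\<^esub> \<oplus> (\<one>\<^bsub>M\<^esub> \<odot> \<zero>)"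
    by (rule br[OF o P.one_closed P.one_closed])
  hence "\<zero> = \<zero> \<oplus> \<ominus>\<one>\<^bsub>M\<^esub> \<oplus> \<zero>" using car o by simp
  hence "\<ominus>\<one>\<^bsub>M\<^esub> = \<zero>" using o by simp
  thus ?thesis using o by (metis P.inv_eq_1_iff)
qed

lemma circ_zero[simp]: "a \<in> A \<Longrightarrow> a \<odot> \<zero> = a" "a \<in> A \<Longrightarrow> \<zero> \<odot> a = a"
  using one_eq car M.r_one M.l_one by (metis)+

lemma lam_def: "lam a b = \<ominus>a \<oplus> (a \<odot> b)" by (simp add: brace_lambda_def)

lemma lam_closed[simp]: "a \<in> A \<Longrightarrow> b \<in> A \<Longrightarrow> lam a b \<in> A"
  by (simp add: lam_def)

lemma circ_lam: "a \<in> A \<Longrightarrow> b \<in> A \<Longrightarrow> a \<odot> b = a \<oplus> lam a b"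
  by (simp add: lam_def cancel1)

lemma lam_add: "a \<in> A \<Longrightarrow> b \<in> A \<Longrightarrow> c \<in> A \<Longrightarrow> lam a (b \<oplus> c) = lam a b \<oplus> lam a c"
  unfolding lam_def using br[of a b c] by (simp add: P.m_assoc)

lemma lam_zero[simp]: "b \<in> A \<Longrightarrow> lam \<zero> b = b" "a \<in> A \<Longrightarrow> lam a \<zero> = \<zero>"
  by (simp_all add: lam_def)

lemma lam_neg: "a \<in> A \<Longrightarrow> b \<in> A \<Longrightarrow> lam a (\<ominus>b) = \<ominus>(lam a b)"
proof -
  assume a: "a \<in> A" and b: "b \<in> A"
  have "lam a b \<oplus> lam a (\<ominus>b) = \<zero>" using lam_add[OF a b, of "\<ominus>b"] a b by simp
  thus ?thesis using a b by (metis P.inv_equality P.inv_closed P.m_comm lam_closed)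
qed

lemma lam_comp: "a \<in> A \<Longrightarrow> b \<in> A \<Longrightarrow> c \<in> A \<Longrightarrow> lam (a \<odot> b) c = lam a (lam b c)"
proof -
  assume a: "a \<in> A" and b: "b \<in> A" and c: "c \<in> A"
  have "lam a (lam b c) = lam a (\<ominus>b) \<oplus> lam a (b \<odot> c)"
    using lam_add a b c by (simp add: lam_def)
  also have "\<dots> = \<ominus>(\<ominus>a \<oplus> (a \<odot> b)) \<oplus> (\<ominus>a \<oplus> (a \<odot> (b \<odot> c)))"
    using a b c by (simp only: lam_neg[OF a b]) (simp add: lam_def)
  also have "\<dots> = \<ominus>(a \<odot> b) \<oplus> (a \<odot> (b \<odot> c))"
  proof -
    have X: "a \<odot> b \<in> A" and Y: "a \<odot> (b \<odot> c) \<in> A" using a b c by auto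
    have "\<ominus>(\<ominus>a \<oplus> (a \<odot> b)) = a \<oplus> \<ominus>(a \<odot> b)" using a X by (simp add: P.inv_mult)
    also have "\<dots> = \<ominus>(a \<odot> b) \<oplus> a" using a X by (simp add: P.m_comm)
    finally have "\<ominus>(\<ominus>a \<oplus> (a \<odot> b)) \<oplus> (\<ominus>a \<oplus> (a \<odot> (b \<odot> c)))
       = \<ominus>(a \<odot> b) \<oplus> (a \<oplus> (\<ominus>a \<oplus> (a \<odot> (b \<odot> c))))" using a X Y by (simp add: P.m_assoc)
    thus ?thesis using a Y by (simp add: cancel1)
  qed
  also have "\<dots> = lam (a \<odot> b) c" using a b c car by (simp add: lam_def M.m_assoc)
  finally show ?thesis by simp
qed

lemma lam_inj: "a \<in> A \<Longrightarrow> b \<in> A \<Longrightarrow> b' \<in> A \<Longrightarrow> lam a b = lam a b' \<Longrightarrow> b = b'"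
proof -
  assume a: "a \<in> A" and b: "b \<in> A" and b': "b' \<in> A" and e: "lam a b = lam a b'"
  have "a \<odot> b = a \<odot> b'" using e a b b' by (metis circ_lam)
  thus "b = b'" using a b b' by (simp add: car M.Units_eq)
qed

lemmas [simp] = car one_eq

abbreviation iM where "iM x \<equiv> inv\<^bsub>M\<^esub> x"

lemma iM_closed[simp]: "a \<in> A \<Longrightarrow> iM a \<in> A"
  using M.inv_closed car by simp

lemma lam_iM: "a \<in> A \<Longrightarrow> b \<in> A \<Longrightarrow> lam (iM a) (lam a b) = b"
  by (simp add: lam_comp[symmetric])

lemma lam_iM2: "a \<in> A \<Longrightarrow> b \<in> A \<Longrightarrow> lam a (lam (iM a) b) = b"
  by (simp add: lam_comp[symmetric])

definition Fx where "Fx = {b \<in> A. \<forall>a\<in>A. lam a b = b}"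
definition Ob where "Ob = A - Fx"

lemma Fx_sub: "Fx \<subseteq> A" by (auto simp: Fx_def)
lemma Ob_sub: "Ob \<subseteq> A" by (auto simp: Ob_def)

lemma Fx_A: "f \<in> Fx \<Longrightarrow> f \<in> A" using Fx_sub by auto
lemma Ob_A: "f \<in> Ob \<Longrightarrow> f \<in> A" using Ob_sub by auto

lemma Fx_lam: "f \<in> Fx \<Longrightarrow> a \<in> A \<Longrightarrow> lam a f = f" by (auto simp: Fx_def)

lemma zero_Fx[simp]: "\<zero> \<in> Fx" by (auto simp: Fx_def)
lemma add_Fx: "f \<in> Fx \<Longrightarrow> g \<in> Fx \<Longrightarrow> f \<oplus> g \<in> Fx"
  by (auto simp: Fx_def lam_add)
lemma neg_Fx: "f \<in> Fx \<Longrightarrow> \<ominus>f \<in> Fx"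
  by (auto simp: Fx_def lam_neg)

lemma Fx_subgroup: "subgroup Fx P"
proof (rule P.subgroupI[OF Fx_sub])
  show "Fx \<noteq> {}" using zero_Fx by blast
  show "\<And>a. a \<in> Fx \<Longrightarrow> \<ominus>a \<in> Fx" by (rule neg_Fx)
  show "\<And>a b. a \<in> Fx \<Longrightarrow> b \<in> Fx \<Longrightarrow> a \<oplus> b \<in> Fx" by (rule add_Fx)
qed

lemma lam_Fx_iff: "a \<in> A \<Longrightarrow> b \<in> A \<Longrightarrow> lam a b \<in> Fx \<longleftrightarrow> b \<in> Fx"
proof
  assume a: "a \<in> A" and b: "b \<in> A" and l: "lam a b \<in> Fx"
  have "b = lam (iM a) (lam a b)" using a b by (simp add: lam_iM)
  also have "\<dots> = lam a b" using l a by (simp add: Fx_lam)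
  finally have bb: "b = lam a b" .
  show "b \<in> Fx" unfolding Fx_def
  proof (intro CollectI conjI ballI b)
    fix a' assume a': "a' \<in> A"
    have "lam a' b = lam a' (lam (iM a) (lam a b))" using a b by (simp add: lam_iM)
    also have "\<dots> = lam (a' \<odot> iM a) (lam a b)" using a a' b by (simp add: lam_comp)
    also have "\<dots> = lam a b" using l a a' by (simp add: Fx_lam)
    finally show "lam a' b = b" using bb by simp
  qed
next
  assume "a \<in> A" "b \<in> A" "b \<in> Fx" thus "lam a b \<in> Fx" by (simp add: Fx_lam)
qed

lemma orbit_eq: "lambda_orbit P M b = (\<lambda>a. lam a b) ` A"
  by (simp add: lambda_orbit_def)

lemma orbit_Ob_sub: "b \<in> Ob \<Longrightarrow> lambda_orbit P M b \<subseteq> Ob"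
  using lam_Fx_iff by (auto simp: orbit_eq Ob_def)

lemma self_in_orbit: "b \<in> A \<Longrightarrow> b \<in> lambda_orbit P M b"
  by (auto simp: orbit_eq intro!: image_eqI[where x="\<zero>"])

lemma orbit_Ob_card: "b \<in> Ob \<Longrightarrow> card (lambda_orbit P M b) > 1"
proof -
  assume b: "b \<in> Ob"
  then obtain a where a: "a \<in> A" "lam a b \<noteq> b" and bA: "b \<in> A" by (auto simp: Ob_def Fx_def)
  have "{b, lam a b} \<subseteq> lambda_orbit P M b" using a bA self_in_orbit by (auto simp: orbit_eq)
  moreover have "finite (lambda_orbit P M b)" using fin by (simp add: orbit_eq)
  ultimately have "card {b, lam a b} \<le> card (lambda_orbit P M b)" by (rule card_mono[rotated])
  thus ?thesis using a by simp
qed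

lemma orbit_Fx: "b \<in> Fx \<Longrightarrow> lambda_orbit P M b = {b}"
  using Fx_lam by (auto simp: orbit_eq Fx_def intro!: image_eqI[where x="\<zero>"])

lemma V_ex: "\<exists>L. Lambda_vertices P M = {L}"
  by (rule card_1_singletonE[OF V1]) blast

lemma orbit_Ob_L: "b \<in> Ob \<Longrightarrow> c \<in> Ob \<Longrightarrow> lambda_orbit P M b = lambda_orbit P M c"
proof -
  assume b: "b \<in> Ob" and c: "c \<in> Ob"
  obtain L where L: "Lambda_vertices P M = {L}" using V_ex by blast
  have "lambda_orbit P M b \<in> Lambda_vertices P M" "lambda_orbit P M c \<in> Lambda_vertices P M"
    using b c Ob_A orbit_Ob_card[OF b] orbit_Ob_card[OF c] unfolding Lambda_vertices_def by auto
  thus ?thesis using L by simp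
qed

lemma Ob_ne: "Ob \<noteq> {}"
proof -
  obtain L where L: "Lambda_vertices P M = {L}" using V_ex by blast
  hence "L \<in> Lambda_vertices P M" by simp
  then obtain b where b: "b \<in> A" "card (lambda_orbit P M b) > 1"
    unfolding Lambda_vertices_def by auto
  have "b \<notin> Fx"
  proof
    assume "b \<in> Fx" hence "card (lambda_orbit P M b) = 1" using orbit_Fx by simp
    thus False using b by simp
  qed
  thus ?thesis using b by (auto simp: Ob_def)
qed

lemma trans_Ob: "x \<in> Ob \<Longrightarrow> y \<in> Ob \<Longrightarrow> \<exists>a\<in>A. lam a x = y"
proof -
  assume x: "x \<in> Ob" and y: "y \<in> Ob"
  have "y \<in> lambda_orbit P M y" using y Ob_sub self_in_orbit by blast
  hence "y \<in> lambda_orbit P M x" using orbit_Ob_L[OF x y] by simp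
  thus ?thesis by (auto simp: orbit_eq)
qed

lemma orbit_is_Ob: "x \<in> Ob \<Longrightarrow> lambda_orbit P M x = Ob"
proof
  assume x: "x \<in> Ob"
  show "lambda_orbit P M x \<subseteq> Ob" using orbit_Ob_sub[OF x] .
  show "Ob \<subseteq> lambda_orbit P M x"
  proof
    fix y assume "y \<in> Ob"
    then obtain a where "a \<in> A" "lam a x = y" using trans_Ob[OF x] by blast
    thus "y \<in> lambda_orbit P M x" by (auto simp: orbit_eq)
  qed
qed

definition x0 where "x0 = (SOME x. x \<in> Ob)"
lemma x0_Ob: "x0 \<in> Ob" using Ob_ne by (simp add: x0_def some_in_eq)
lemma x0_A[simp]: "x0 \<in> A" using x0_Ob Ob_sub by blast

definition Stab where "Stab = {a \<in> A. lam a x0 = x0}"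

lemma orbit_stab: "card A = card Ob * card Stab"
proof -
  define r where "r y = (SOME a. a \<in> A \<and> lam a x0 = y)" for y
  have r: "r y \<in> A \<and> lam (r y) x0 = y" if "y \<in> Ob" for y
    using trans_Ob[OF x0_Ob that] unfolding r_def by (rule someI2_bex) auto
  define g where "g = (\<lambda>(y, s). r y \<odot> s)"
  have "bij_betw g (Ob \<times> Stab) A"
  proof (rule bij_betwI')
    fix p q assume p: "p \<in> Ob \<times> Stab" and q: "q \<in> Ob \<times> Stab"
    obtain y s where ys: "p = (y, s)" "y \<in> Ob" "s \<in> Stab" using p by auto
    obtain y' s' where ys': "q = (y', s')" "y' \<in> Ob" "s' \<in> Stab" using q by auto
    have sA: "s \<in> A" "s' \<in> A" using ys ys' by (auto simp: Stab_def)
    show "(g p = g q) = (p = q)"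
    proof
      assume e: "g p = g q"
      hence e2: "r y \<odot> s = r y' \<odot> s'" using ys ys' by (simp add: g_def)
      have "lam (r y \<odot> s) x0 = y" using ys r[of y] sA by (simp add: lam_comp Stab_def)
      moreover have "lam (r y' \<odot> s') x0 = y'" using ys' r[of y'] sA by (simp add: lam_comp Stab_def)
      ultimately have "y = y'" using e2 by simp
      thus "p = q" using e2 ys ys' sA r[of y] by simp
    qed simp
  next
    fix p assume "p \<in> Ob \<times> Stab" thus "g p \<in> A" using r by (auto simp: g_def Stab_def)
  next
    fix a assume a: "a \<in> A"
    define y where "y = lam a x0"
    have y: "y \<in> Ob" using a orbit_Ob_sub[OF x0_Ob] by (auto simp: y_def orbit_eq)
    define s where "s = iM (r y) \<odot> a"
    have sA: "s \<in> A" using r[OF y] a by (simp add: s_def)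
    have "lam s x0 = lam (iM (r y)) y" using r[OF y] a by (simp add: s_def lam_comp y_def)
    also have "\<dots> = x0" using r[OF y] by (metis lam_iM x0_A)
    finally have "s \<in> Stab" using sA by (simp add: Stab_def)
    moreover have "g (y, s) = a" using r[OF y] a by (simp add: g_def s_def M.m_assoc[symmetric])
    ultimately show "\<exists>p \<in> Ob \<times> Stab. a = g p" using y by force
  qed
  hence "card (Ob \<times> Stab) = card A" by (rule bij_betw_same_card)
  thus ?thesis by (simp add: card_cartesian_product)
qed

lemma card_Ob_ge2: "card Ob \<ge> 2"
  using orbit_Ob_card[OF x0_Ob] orbit_is_Ob[OF x0_Ob] by simp

lemma card_Fx_ge1: "card Fx \<ge> 1"
proof -
  have "finite Fx" using fin Fx_sub finite_subset by blast
  thus ?thesis using zero_Fx by (metis One_nat_def Suc_leI card_gt_0_iff empty_iff)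
qed

lemma card_A_Fx: "card A = 2 * card Fx" and card_Ob_Fx: "card Ob = card Fx"
proof -
  define k where "k = card (rcosets\<^bsub>P\<^esub> Fx)"
  have lag: "k * card Fx = card A"
    using P.lagrange[OF Fx_subgroup] by (simp add: k_def order_def)
  have cO: "card Ob = card A - card Fx"
    unfolding Ob_def using fin Fx_sub by (simp add: card_Diff_subset finite_subset)
  define f where "f = card Fx"
  define s where "s = card Stab"
  have f1: "f \<ge> 1" using card_Fx_ge1 by (simp add: f_def)
  have o2: "card Ob \<ge> 2" by (rule card_Ob_ge2)
  have os: "card A = card Ob * s" using orbit_stab by (simp add: s_def)
  have k2: "k \<ge> 2"
  proof (rule ccontr)
    assume "\<not> k \<ge> 2" hence "k \<le> 1" by simp
    hence "k * f \<le> 1 * f" by (rule mult_le_mono1)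
    hence "card A \<le> f" using lag by (simp add: f_def)
    thus False using cO o2 by (simp add: f_def)
  qed
  define m where "m = k - 1"
  have m: "k = m + 1" "m \<ge> 1" using k2 by (simp_all add: m_def)
  have "card Ob = m * f" using cO lag m by (simp add: f_def algebra_simps)
  hence "m * f * s = (m + 1) * f" using os lag m by (simp add: f_def)
  hence e: "f * (m * s) = f * (m + 1)" by (simp add: algebra_simps)
  have f0: "f \<noteq> 0" using f1 by simp
  have "m * s = m + 1" using e by (simp only: mult_left_cancel[OF f0])
  hence "m dvd m + 1" by (metis dvd_triv_left)
  hence "m dvd 1" by (metis dvd_add_right_iff dvd_refl)
  hence "m = 1" by simp
  hence "k = 2" using m by simp
  thus "card A = 2 * card Fx" using lag by simp
  thus "card Ob = card Fx" using cO by simp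
qed

lemma Ob_shift: "x \<in> Ob \<Longrightarrow> f \<in> Fx \<Longrightarrow> x \<oplus> f \<in> Ob"
proof -
  assume x: "x \<in> Ob" and f: "f \<in> Fx"
  have xA: "x \<in> A" and fA: "f \<in> A" using x f Ob_sub Fx_sub by auto
  show ?thesis
  proof (rule ccontr)
    assume "x \<oplus> f \<notin> Ob"
    hence "x \<oplus> f \<in> Fx" using xA fA by (simp add: Ob_def)
    hence "x \<oplus> f \<oplus> \<ominus>f \<in> Fx" using neg_Fx f add_Fx by blast
    hence "x \<in> Fx" using xA fA by (simp add: P.m_assoc)
    thus False using x by (simp add: Ob_def)
  qed
qed

lemma Ob_decomp: "x \<in> Ob \<Longrightarrow> y \<in> Ob \<Longrightarrow> \<exists>f\<in>Fx. y = x \<oplus> f"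
proof -
  assume x: "x \<in> Ob" and y: "y \<in> Ob"
  have xA: "x \<in> A" using x Ob_sub by auto
  have sub: "(\<lambda>f. x \<oplus> f) ` Fx \<subseteq> Ob" using Ob_shift x by auto
  have inj: "inj_on (\<lambda>f. x \<oplus> f) Fx" using xA by (auto simp: inj_on_def dest!: Fx_A)
  have "card ((\<lambda>f. x \<oplus> f) ` Fx) = card Ob" using card_inj_on_le inj card_Ob_Fx
    by (simp add: card_image)
  hence "(\<lambda>f. x \<oplus> f) ` Fx = Ob" using sub fin Ob_sub by (meson card_subset_eq finite_subset)
  thus ?thesis using y by auto
qed

lemma double_Fx: "x \<in> Ob \<Longrightarrow> x \<oplus> x \<in> Fx"
proof (rule ccontr)
  assume x: "x \<in> Ob" and n: "x \<oplus> x \<notin> Fx"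
  have xA: "x \<in> A" using x Ob_sub by auto
  hence "x \<oplus> x \<in> Ob" using n by (simp add: Ob_def)
  then obtain f where f: "f \<in> Fx" "x \<oplus> x = x \<oplus> f" using Ob_decomp[OF x] by blast
  hence "x = f" using xA Fx_sub by auto
  thus False using x f by (simp add: Ob_def)
qed

definition cc where "cc a = lam a x0 \<oplus> \<ominus>x0"

lemma cc_A[simp]: "a \<in> A \<Longrightarrow> cc a \<in> A" by (simp add: cc_def)

lemma lam_x0: "a \<in> A \<Longrightarrow> lam a x0 = x0 \<oplus> cc a"
  using P.m_lcomm[of x0 "lam a x0" "\<ominus>x0"] by (simp add: cc_def)

lemma cc_Fx: "a \<in> A \<Longrightarrow> cc a \<in> Fx"
proof -
  assume a: "a \<in> A"
  have "lam a x0 \<in> Ob" using a orbit_Ob_sub[OF x0_Ob] by (auto simp: orbit_eq)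
  then obtain f where f: "f \<in> Fx" "lam a x0 = x0 \<oplus> f" using Ob_decomp[OF x0_Ob] by blast
  hence "cc a = f" using lam_x0[OF a] a Fx_sub by auto
  thus ?thesis using f by simp
qed


lemma lam_Ob: "a \<in> A \<Longrightarrow> y \<in> Ob \<Longrightarrow> lam a y = y \<oplus> cc a"
proof -
  assume a: "a \<in> A" and y: "y \<in> Ob"
  obtain f where f: "f \<in> Fx" "y = x0 \<oplus> f" using Ob_decomp[OF x0_Ob y] by blast
  have "lam a y = lam a x0 \<oplus> lam a f" using a f Fx_A by (simp add: lam_add)
  also have "\<dots> = x0 \<oplus> cc a \<oplus> f" using a f by (simp add: lam_x0 Fx_lam)
  finally show ?thesis using f a Fx_A by (simp add: P.m_ac)
qed

lemma circ_F: "a \<in> A \<Longrightarrow> f \<in> Fx \<Longrightarrow> a \<odot> f = a \<oplus> f"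
  using Fx_A by (simp add: circ_lam Fx_lam)

lemma circ_O: "a \<in> A \<Longrightarrow> b \<in> Ob \<Longrightarrow> a \<odot> b = a \<oplus> b \<oplus> cc a"
  using Ob_A by (simp add: circ_lam lam_Ob P.m_assoc)

lemma cc_hom: "a \<in> A \<Longrightarrow> b \<in> A \<Longrightarrow> cc (a \<odot> b) = cc a \<oplus> cc b"
proof -
  assume a: "a \<in> A" and b: "b \<in> A"
  have "x0 \<oplus> cc (a \<odot> b) = lam (a \<odot> b) x0" using a b by (simp add: lam_x0)
  also have "\<dots> = lam a (x0 \<oplus> cc b)" using a b by (simp only: lam_comp[OF a b x0_A] lam_x0[OF b])
  also have "\<dots> = x0 \<oplus> cc a \<oplus> cc b" using a b cc_Fx[OF b] by (simp add: lam_add lam_x0 Fx_lam)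
  finally show ?thesis using a b by (simp add: P.m_assoc)
qed

lemma cc_surj: "f \<in> Fx \<Longrightarrow> \<exists>a\<in>A. cc a = f"
proof -
  assume f: "f \<in> Fx"
  have "x0 \<oplus> f \<in> Ob" using Ob_shift[OF x0_Ob f] .
  then obtain a where a: "a \<in> A" "lam a x0 = x0 \<oplus> f" using trans_Ob[OF x0_Ob] by blast
  hence "cc a = f" using lam_x0[OF a(1)] f Fx_A by auto
  thus ?thesis using a by blast
qed

lemma cc_add: "a \<in> A \<Longrightarrow> f \<in> Fx \<Longrightarrow> cc (a \<oplus> f) = cc a \<oplus> cc f"
  using cc_hom[of a f] circ_F[of a f] Fx_A[of f] by simp

lemma cc_zero[simp]: "cc \<zero> = \<zero>" by (simp add: cc_def)

lemma Fx_two: "f \<in> Fx \<Longrightarrow> f \<oplus> f = \<zero>"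
proof -
  assume f: "f \<in> Fx"
  obtain a where a: "a \<in> A" "cc a = f" using cc_surj[OF f] by blast
  have fA: "f \<in> A" using f Fx_A by auto
  have w: "x0 \<oplus> x0 \<in> Fx" using double_Fx[OF x0_Ob] .
  have "x0 \<oplus> x0 = lam a (x0 \<oplus> x0)" using Fx_lam[OF w a(1)] by simp
  also have "\<dots> = (x0 \<oplus> f) \<oplus> (x0 \<oplus> f)" using a by (simp add: lam_add lam_x0)
  also have "\<dots> = (x0 \<oplus> x0) \<oplus> (f \<oplus> f)" using fA by (simp add: P.m_ac)
  finally show ?thesis using fA by simp
qed

lemma cc_cc: "f \<in> Fx \<Longrightarrow> cc (cc f) = \<zero>"
proof -
  assume f: "f \<in> Fx"
  have fA: "f \<in> A" using f Fx_A by auto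
  have cf: "cc f \<in> Fx" using cc_Fx fA by auto
  have "cc f \<oplus> cc x0 = cc (f \<odot> x0)" using fA by (simp add: cc_hom)
  also have "\<dots> = cc (x0 \<oplus> (f \<oplus> cc f))" using fA x0_Ob by (simp add: circ_O P.m_ac)
  also have "\<dots> = cc x0 \<oplus> (cc f \<oplus> cc (cc f))" using f cf fA add_Fx by (simp add: cc_add)
  finally have "cc x0 \<oplus> cc f = (cc x0 \<oplus> cc f) \<oplus> cc (cc f)" using fA by (simp add: P.m_ac)
  thus ?thesis using fA by simp
qed

lemma Fx_decomp: "f \<in> Fx \<Longrightarrow> (\<exists>g\<in>Fx. f = cc g) \<or> (\<exists>g\<in>Fx. f = cc x0 \<oplus> cc g)"
proof -
  assume f: "f \<in> Fx"
  obtain a where a: "a \<in> A" "cc a = f" using cc_surj[OF f] by blast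
  show ?thesis
  proof (cases "a \<in> Fx")
    case True thus ?thesis using a by blast
  next
    case False
    hence "a \<in> Ob" using a by (simp add: Ob_def)
    then obtain g where g: "g \<in> Fx" "a = x0 \<oplus> g" using Ob_decomp[OF x0_Ob] by blast
    thus ?thesis using a cc_add by auto
  qed
qed



lemma final_iso:
  fixes Q Qc :: "'b monoid" and g :: "'b \<Rightarrow> 'a" and od :: "'b \<Rightarrow> bool" and C :: "'b \<Rightarrow> 'a"
  assumes fQ: "finite (carrier Q)" and cQ: "card (carrier Q) = card A"
    and gA: "\<And>p. p \<in> carrier Q \<Longrightarrow> g p \<in> A"
    and surj: "A \<subseteq> g ` carrier Q"
    and addc: "\<And>p q. p \<in> carrier Q \<Longrightarrow> q \<in> carrier Q \<Longrightarrow>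
        p \<otimes>\<^bsub>Q\<^esub> q \<in> carrier Q \<and> g (p \<otimes>\<^bsub>Q\<^esub> q) = g p \<oplus> g q"
    and circc: "\<And>p q. p \<in> carrier Q \<Longrightarrow> q \<in> carrier Q \<Longrightarrow>
        p \<otimes>\<^bsub>Qc\<^esub> q \<in> carrier Q \<and> g (p \<otimes>\<^bsub>Qc\<^esub> q) = g p \<oplus> g q \<oplus> (if od q then C p else \<zero>)"
    and odO: "\<And>q. q \<in> carrier Q \<Longrightarrow> od q \<Longrightarrow> g q \<in> Ob"
    and evF: "\<And>q. q \<in> carrier Q \<Longrightarrow> \<not> od q \<Longrightarrow> g q \<in> Fx"
    and Cc: "\<And>p. p \<in> carrier Q \<Longrightarrow> cc (g p) = C p"
  shows "brace_iso P M Q Qc"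
proof -
  have img: "g ` carrier Q = A" using gA surj by auto
  have inj: "inj_on g (carrier Q)" using eq_card_imp_inj_on[OF fQ, of g] img cQ by simp
  have bij: "bij_betw g (carrier Q) A" using inj img by (simp add: bij_betw_def)
  have circ': "p \<otimes>\<^bsub>Qc\<^esub> q \<in> carrier Q \<and> g (p \<otimes>\<^bsub>Qc\<^esub> q) = g p \<odot> g q"
    if p: "p \<in> carrier Q" and q: "q \<in> carrier Q" for p q
  proof (cases "od q")
    case True
    thus ?thesis using circc[OF p q] odO[OF q] gA[OF p] Cc[OF p] by (simp add: circ_O)
  next
    case False
    thus ?thesis using circc[OF p q] evF[OF q] gA[OF p] gA[OF q] by (simp add: circ_F)
  qed
  show ?thesis by (rule iso_lemma[OF bij addc circ'])
qed

lemma int4: "{0..3::int} = {0,1,2,3}" by auto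
lemma int2: "{0..1::int} = {0,1}" by auto

lemma case1:
  assumes x: "xx \<in> Ob" and eF: "e \<in> Fx" and cx: "cc xx = e" and ce: "cc e = \<zero>"
    and xx: "xx \<oplus> xx = e" and Fall: "\<forall>f\<in>Fx. f = \<zero> \<or> f = e" and c2: "card Fx = 2"
  shows "brace_iso P M B1_add B1_circ"
proof -
  have xA: "xx \<in> A" and eA: "e \<in> A" using x eF Ob_A Fx_A by auto
  have r1: "xx \<oplus> xx = e" "\<And>z. z \<in> A \<Longrightarrow> xx \<oplus> (xx \<oplus> z) = e \<oplus> z"
    using xx xA by (simp_all add: P.m_assoc[symmetric])
  have r2: "e \<oplus> e = \<zero>" "\<And>z. z \<in> A \<Longrightarrow> e \<oplus> (e \<oplus> z) = z"
    using Fx_two[OF eF] eA by (simp_all add: P.m_assoc[symmetric])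
  note R = r1 r2 xA eA P.m_ac
  define g where "g j = (if j = (0::int) then \<zero> else if j = 1 then xx else if j = 2 then e else xx \<oplus> e)" for j
  have carB: "carrier B1_add = {0,1,2,3}" by (simp add: B1_add_def int4)
  have xeO: "xx \<oplus> e \<in> Ob" using Ob_shift[OF x eF] .
  have cxe: "cc (xx \<oplus> e) = e" using cc_add[OF xA eF] cx ce eA by simp
  have H1: "\<forall>p\<in>{0,1,2,3::int}. \<forall>q\<in>{0,1,2,3::int}. p \<otimes>\<^bsub>B1_add\<^esub> q \<in> carrier B1_add \<and>
      g (p \<otimes>\<^bsub>B1_add\<^esub> q) = g p \<oplus> g q"
    by (simp add: B1_add_def int4 g_def R)
  have H2: "\<forall>p\<in>{0,1,2,3::int}. \<forall>q\<in>{0,1,2,3::int}. p \<otimes>\<^bsub>B1_circ\<^esub> q \<in> carrier B1_add \<and>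
      g (p \<otimes>\<^bsub>B1_circ\<^esub> q) = g p \<oplus> g q \<oplus> (if q = 1 \<or> q = 3 then (if p = 1 \<or> p = 3 then e else \<zero>) else \<zero>)"
    by (simp add: B1_add_def B1_circ_def int4 g_def R)
  have g0: "g 0 = \<zero>" "g 1 = xx" "g 2 = e" "g 3 = xx \<oplus> e" by (simp_all add: g_def)
  show ?thesis
  proof (rule final_iso[where g = g and od = "\<lambda>j. j = 1 \<or> j = 3" and C = "\<lambda>j. if j = 1 \<or> j = 3 then e else \<zero>"])
    show "finite (carrier B1_add)" by (simp add: carB)
    show "card (carrier B1_add) = card A" using card_A_Fx c2 by (simp add: carB)
    show "\<And>p. p \<in> carrier B1_add \<Longrightarrow> g p \<in> A" using xA eA by (auto simp: carB g_def)
    show "A \<subseteq> g ` carrier B1_add"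
    proof
      fix y assume y: "y \<in> A"
      have "y \<in> {\<zero>, e, xx, xx \<oplus> e}"
      proof (cases "y \<in> Fx")
        case True thus ?thesis using Fall by auto
      next
        case False
        hence "y \<in> Ob" using y by (simp add: Ob_def)
        then obtain f where "f \<in> Fx" "y = xx \<oplus> f" using Ob_decomp[OF x] by blast
        thus ?thesis using Fall xA by auto
      qed
      moreover have "g 0 \<in> g ` carrier B1_add" "g 1 \<in> g ` carrier B1_add"
        "g 2 \<in> g ` carrier B1_add" "g 3 \<in> g ` carrier B1_add" by (simp_all add: carB)
      ultimately show "y \<in> g ` carrier B1_add" unfolding g0 by auto
    qed
    show "\<And>p q. p \<in> carrier B1_add \<Longrightarrow> q \<in> carrier B1_add \<Longrightarrow>
        p \<otimes>\<^bsub>B1_add\<^esub> q \<in> carrier B1_add \<and> g (p \<otimes>\<^bsub>B1_add\<^esub> q) = g p \<oplus> g q"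
      using H1 unfolding carB by blast
    show "\<And>p q. p \<in> carrier B1_add \<Longrightarrow> q \<in> carrier B1_add \<Longrightarrow>
        p \<otimes>\<^bsub>B1_circ\<^esub> q \<in> carrier B1_add \<and> g (p \<otimes>\<^bsub>B1_circ\<^esub> q) = g p \<oplus> g q \<oplus>
          (if q = 1 \<or> q = 3 then (if p = 1 \<or> p = 3 then e else \<zero>) else \<zero>)"
      using H2 unfolding carB by blast
    show "\<And>q. q \<in> carrier B1_add \<Longrightarrow> q = 1 \<or> q = 3 \<Longrightarrow> g q \<in> Ob"
      using x xeO by (auto simp: g_def)
    show "\<And>q. q \<in> carrier B1_add \<Longrightarrow> \<not> (q = 1 \<or> q = 3) \<Longrightarrow> g q \<in> Fx"
      using eF by (auto simp: g_def carB)
    show "\<And>p. p \<in> carrier B1_add \<Longrightarrow> cc (g p) = (if p = 1 \<or> p = 3 then e else \<zero>)"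
      using cx ce cxe by (auto simp: g_def carB)
  qed
qed

lemma case2:
  assumes x: "xx \<in> Ob" and eF: "e \<in> Fx" and cx: "cc xx = e" and ce: "cc e = \<zero>"
    and xx: "xx \<oplus> xx = \<zero>" and Fall: "\<forall>f\<in>Fx. f = \<zero> \<or> f = e" and c2: "card Fx = 2"
  shows "brace_iso P M B2_add B2_circ"
proof -
  have xA: "xx \<in> A" and eA: "e \<in> A" using x eF Ob_A Fx_A by auto
  have r1: "xx \<oplus> xx = \<zero>" "\<And>z. z \<in> A \<Longrightarrow> xx \<oplus> (xx \<oplus> z) = z"
    using xx xA by (simp_all add: P.m_assoc[symmetric])
  have r2: "e \<oplus> e = \<zero>" "\<And>z. z \<in> A \<Longrightarrow> e \<oplus> (e \<oplus> z) = z"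
    using Fx_two[OF eF] eA by (simp_all add: P.m_assoc[symmetric])
  note R = r1 r2 xA eA P.m_ac
  define g where "g = (\<lambda>(i::int, j::int). (if j = 1 then xx else \<zero>) \<oplus> (if i = 1 then e else \<zero>))"
  define C where "C = (\<lambda>(i::int, j::int). if j = 1 then e else \<zero>)"
  define od where "od = (\<lambda>(i::int, j::int). j = 1)"
  have carB: "carrier B2_add = {0,1} \<times> {0,1}" by (simp add: B2_add_def int2)
  have xeO: "xx \<oplus> e \<in> Ob" using Ob_shift[OF x eF] .
  have cxe: "cc (xx \<oplus> e) = e" using cc_add[OF xA eF] cx ce eA by simp
  have H1: "\<forall>i\<in>{0,1::int}. \<forall>j\<in>{0,1::int}. \<forall>i'\<in>{0,1::int}. \<forall>j'\<in>{0,1::int}.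
      (i,j) \<otimes>\<^bsub>B2_add\<^esub> (i',j') \<in> carrier B2_add \<and>
      g ((i,j) \<otimes>\<^bsub>B2_add\<^esub> (i',j')) = g (i,j) \<oplus> g (i',j')"
    by (simp add: B2_add_def int2 g_def R)
  have H2: "\<forall>i\<in>{0,1::int}. \<forall>j\<in>{0,1::int}. \<forall>i'\<in>{0,1::int}. \<forall>j'\<in>{0,1::int}.
      (i,j) \<otimes>\<^bsub>B2_circ\<^esub> (i',j') \<in> carrier B2_add \<and>
      g ((i,j) \<otimes>\<^bsub>B2_circ\<^esub> (i',j')) = g (i,j) \<oplus> g (i',j') \<oplus> (if od (i',j') then C (i,j) else \<zero>)"
    by (simp add: B2_add_def B2_circ_def int2 g_def C_def od_def R)
  have g0: "g (0,0) = \<zero>" "g (1,0) = e" "g (0,1) = xx" "g (1,1) = xx \<oplus> e"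
    using xA eA by (simp_all add: g_def)
  show ?thesis
  proof (rule final_iso[where g = g and od = od and C = C])
    show "finite (carrier B2_add)" by (simp add: carB)
    show "card (carrier B2_add) = card A" using card_A_Fx c2 by (simp add: carB)
    show "\<And>p. p \<in> carrier B2_add \<Longrightarrow> g p \<in> A" using xA eA by (auto simp: carB g_def)
    show "A \<subseteq> g ` carrier B2_add"
    proof
      fix y assume y: "y \<in> A"
      have "y \<in> {\<zero>, e, xx, xx \<oplus> e}"
      proof (cases "y \<in> Fx")
        case True thus ?thesis using Fall by auto
      next
        case False
        hence "y \<in> Ob" using y by (simp add: Ob_def)
        then obtain f where "f \<in> Fx" "y = xx \<oplus> f" using Ob_decomp[OF x] by blast
        thus ?thesis using Fall xA by auto
      qed
      moreover have "g (0,0) \<in> g ` carrier B2_add" "g (1,0) \<in> g ` carrier B2_add"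
        "g (0,1) \<in> g ` carrier B2_add" "g (1,1) \<in> g ` carrier B2_add" by (simp_all add: carB)
      ultimately show "y \<in> g ` carrier B2_add" unfolding g0 by auto
    qed
    show "\<And>p q. p \<in> carrier B2_add \<Longrightarrow> q \<in> carrier B2_add \<Longrightarrow>
        p \<otimes>\<^bsub>B2_add\<^esub> q \<in> carrier B2_add \<and> g (p \<otimes>\<^bsub>B2_add\<^esub> q) = g p \<oplus> g q"
      using H1 unfolding carB by blast
    show "\<And>p q. p \<in> carrier B2_add \<Longrightarrow> q \<in> carrier B2_add \<Longrightarrow>
        p \<otimes>\<^bsub>B2_circ\<^esub> q \<in> carrier B2_add \<and> g (p \<otimes>\<^bsub>B2_circ\<^esub> q) = g p \<oplus> g q \<oplus>
          (if od q then C p else \<zero>)"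
      using H2 unfolding carB by blast
    show "\<And>q. q \<in> carrier B2_add \<Longrightarrow> od q \<Longrightarrow> g q \<in> Ob"
      using x xeO xA by (auto simp: g_def od_def carB)
    show "\<And>q. q \<in> carrier B2_add \<Longrightarrow> \<not> od q \<Longrightarrow> g q \<in> Fx"
      using eF eA xA by (auto simp: g_def od_def carB)
    show "\<And>p. p \<in> carrier B2_add \<Longrightarrow> cc (g p) = C p"
      using cx ce cxe eA xA by (auto simp: g_def C_def carB)
  qed
qed

lemma case3:
  assumes x: "xx \<in> Ob" and uF: "u \<in> Fx" and u0: "u \<noteq> \<zero>" and cu: "cc u = \<zero>"
    and xx: "xx \<oplus> xx = cc xx" and cv: "cc (cc xx) = u"
    and Fall: "\<forall>f\<in>Fx. f = \<zero> \<or> f = u \<or> f = cc xx \<or> f = cc xx \<oplus> u" and c4: "card Fx = 4"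
  shows "brace_iso P M B3_add B3_circ"
proof -
  define v where "v = cc xx"
  have xA: "xx \<in> A" and uA: "u \<in> A" using x uF Ob_A Fx_A by auto
  have vF: "v \<in> Fx" using cc_Fx xA by (simp add: v_def)
  hence vA: "v \<in> A" by (rule Fx_A)
  have r1: "xx \<oplus> xx = v" "\<And>z. z \<in> A \<Longrightarrow> xx \<oplus> (xx \<oplus> z) = v \<oplus> z"
    using xx xA by (simp_all add: P.m_assoc[symmetric] v_def)
  have r2: "u \<oplus> u = \<zero>" "\<And>z. z \<in> A \<Longrightarrow> u \<oplus> (u \<oplus> z) = z"
    using Fx_two[OF uF] uA by (simp_all add: P.m_assoc[symmetric])
  have r3: "v \<oplus> v = \<zero>" "\<And>z. z \<in> A \<Longrightarrow> v \<oplus> (v \<oplus> z) = z"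
    using Fx_two[OF vF] vA by (simp_all add: P.m_assoc[symmetric])
  note R = r1 r2 r3 xA uA vA P.m_ac
  define X where "X j = (if j = (0::int) then \<zero> else if j = 1 then xx else if j = 2 then v else xx \<oplus> v)" for j
  define U where "U i = (if i = (1::int) then u else \<zero>)" for i
  define g where "g = (\<lambda>(i, j). X j \<oplus> U i)"
  define C where "C = (\<lambda>(i::int, j::int). if j = 0 then \<zero> else if j = 1 then v else if j = 2 then u else v \<oplus> u)"
  define od where "od = (\<lambda>(i::int, j::int). j = 1 \<or> j = 3)"
  have carB: "carrier B3_add = {0,1} \<times> {0,1,2,3}" by (simp add: B3_add_def int2 int4)
  have xvO: "xx \<oplus> v \<in> Ob" using Ob_shift[OF x vF] .
  have xuO: "xx \<oplus> u \<in> Ob" using Ob_shift[OF x uF] .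
  have xvuO: "xx \<oplus> v \<oplus> u \<in> Ob" using Ob_shift[OF xvO uF] .
  have vuF: "v \<oplus> u \<in> Fx" using add_Fx vF uF by blast
  have ccv: "cc v = u" using cv by (simp add: v_def)
  have cxx: "cc xx = v" by (simp add: v_def)
  have cvu: "cc (v \<oplus> u) = u" using cc_add[OF vA uF] ccv cu uA by simp
  have cxu: "cc (xx \<oplus> u) = v" using cc_add[OF xA uF] cu vA by (simp add: v_def)
  have cxv: "cc (xx \<oplus> v) = v \<oplus> u" using cc_add[OF xA vF] ccv by (simp add: v_def)
  have cxvu: "cc (xx \<oplus> v \<oplus> u) = v \<oplus> u" using cc_add[OF _ uF, of "xx \<oplus> v"] cxv cu xA vA uA by simp
  have H1: "\<forall>i\<in>{0,1::int}. \<forall>j\<in>{0,1,2,3::int}. \<forall>i'\<in>{0,1::int}. \<forall>j'\<in>{0,1,2,3::int}.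
      (i,j) \<otimes>\<^bsub>B3_add\<^esub> (i',j') \<in> carrier B3_add \<and>
      g ((i,j) \<otimes>\<^bsub>B3_add\<^esub> (i',j')) = g (i,j) \<oplus> g (i',j')"
    by (simp add: B3_add_def int2 int4 g_def X_def U_def R)
  have H2: "\<forall>i\<in>{0,1::int}. \<forall>j\<in>{0,1,2,3::int}. \<forall>i'\<in>{0,1::int}. \<forall>j'\<in>{0,1,2,3::int}.
      (i,j) \<otimes>\<^bsub>B3_circ\<^esub> (i',j') \<in> carrier B3_add \<and>
      g ((i,j) \<otimes>\<^bsub>B3_circ\<^esub> (i',j')) = g (i,j) \<oplus> g (i',j') \<oplus> (if od (i',j') then C (i,j) else \<zero>)"
    by (simp add: B3_add_def B3_circ_def eps4_def int2 int4 g_def X_def U_def C_def od_def R)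
  have g0: "g (0,0) = \<zero>" "g (1,0) = u" "g (0,2) = v" "g (1,2) = v \<oplus> u"
     "g (0,1) = xx" "g (1,1) = xx \<oplus> u" "g (0,3) = xx \<oplus> v" "g (1,3) = xx \<oplus> (v \<oplus> u)"
    using xA uA vA by (simp_all add: g_def X_def U_def P.m_assoc)
  show ?thesis
  proof (rule final_iso[where g = g and od = od and C = C])
    show "finite (carrier B3_add)" by (simp add: carB)
    show "card (carrier B3_add) = card A" using card_A_Fx c4 by (simp add: carB)
    show "\<And>p. p \<in> carrier B3_add \<Longrightarrow> g p \<in> A" using xA uA vA by (auto simp: carB g_def X_def U_def)
    show "A \<subseteq> g ` carrier B3_add"
    proof
      fix y assume y: "y \<in> A"
      have "y \<in> {\<zero>, u, v, v \<oplus> u, xx, xx \<oplus> u, xx \<oplus> v, xx \<oplus> (v \<oplus> u)}"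
      proof (cases "y \<in> Fx")
        case True thus ?thesis using Fall by (auto simp: v_def)
      next
        case False
        hence "y \<in> Ob" using y by (simp add: Ob_def)
        then obtain f where "f \<in> Fx" "y = xx \<oplus> f" using Ob_decomp[OF x] by blast
        thus ?thesis using Fall xA by (auto simp: v_def)
      qed
      moreover have "g (0,0) \<in> g ` carrier B3_add" "g (1,0) \<in> g ` carrier B3_add"
        "g (0,1) \<in> g ` carrier B3_add" "g (1,1) \<in> g ` carrier B3_add"
        "g (0,2) \<in> g ` carrier B3_add" "g (1,2) \<in> g ` carrier B3_add"
        "g (0,3) \<in> g ` carrier B3_add" "g (1,3) \<in> g ` carrier B3_add" by (simp_all add: carB)
      ultimately show "y \<in> g ` carrier B3_add" unfolding g0 by auto
    qed
    show "\<And>p q. p \<in> carrier B3_add \<Longrightarrow> q \<in> carrier B3_add \<Longrightarrow>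
        p \<otimes>\<^bsub>B3_add\<^esub> q \<in> carrier B3_add \<and> g (p \<otimes>\<^bsub>B3_add\<^esub> q) = g p \<oplus> g q"
      using H1 unfolding carB by blast
    show "\<And>p q. p \<in> carrier B3_add \<Longrightarrow> q \<in> carrier B3_add \<Longrightarrow>
        p \<otimes>\<^bsub>B3_circ\<^esub> q \<in> carrier B3_add \<and> g (p \<otimes>\<^bsub>B3_circ\<^esub> q) = g p \<oplus> g q \<oplus>
          (if od q then C p else \<zero>)"
      using H2 unfolding carB by blast
    show "\<And>q. q \<in> carrier B3_add \<Longrightarrow> od q \<Longrightarrow> g q \<in> Ob"
      using x xuO xvO xvuO xA vA uA by (auto simp: g_def carB X_def U_def od_def)
    show "\<And>q. q \<in> carrier B3_add \<Longrightarrow> \<not> od q \<Longrightarrow> g q \<in> Fx"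
      using uF vF vuF vA uA by (auto simp: g_def carB X_def U_def od_def)
    show "\<And>p. p \<in> carrier B3_add \<Longrightarrow> cc (g p) = C p"
      using cu ccv cvu cxu cxv cxvu xA uA vA cxx by (auto simp: g_def carB X_def U_def C_def)
  qed
qed


lemma data:
  "(\<exists>xx e. xx \<in> Ob \<and> e \<in> Fx \<and> cc xx = e \<and> cc e = \<zero> \<and> xx \<oplus> xx = e \<and> (\<forall>f\<in>Fx. f = \<zero> \<or> f = e) \<and> card Fx = 2)
 \<or> (\<exists>xx e. xx \<in> Ob \<and> e \<in> Fx \<and> cc xx = e \<and> cc e = \<zero> \<and> xx \<oplus> xx = \<zero> \<and> (\<forall>f\<in>Fx. f = \<zero> \<or> f = e) \<and> card Fx = 2)
 \<or> (\<exists>xx u. xx \<in> Ob \<and> u \<in> Fx \<and> u \<noteq> \<zero> \<and> cc u = \<zero> \<and> xx \<oplus> xx = cc xx \<and> cc (cc xx) = u \<and>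
        (\<forall>f\<in>Fx. f = \<zero> \<or> f = u \<or> f = cc xx \<or> f = cc xx \<oplus> u) \<and> card Fx = 4)"
proof -
  define v0 where "v0 = cc x0"
  have v0F: "v0 \<in> Fx" using cc_Fx x0_A by (simp add: v0_def)
  have v0A: "v0 \<in> A" using v0F Fx_A by blast
  have w: "x0 \<oplus> x0 \<in> Fx" using double_Fx x0_Ob by blast
  have wA: "x0 \<oplus> x0 \<in> A" by simp
  have c2: "card Fx \<ge> 2" using card_Ob_Fx card_Ob_ge2 by simp
  have finF: "finite Fx" using fin Fx_sub finite_subset by blast
  show ?thesis
  proof (cases "\<forall>f\<in>Fx. cc f = \<zero>")
    case True
    have Fall: "\<forall>f\<in>Fx. f = \<zero> \<or> f = v0"
    proof
      fix f assume f: "f \<in> Fx"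
      show "f = \<zero> \<or> f = v0"
      proof (cases "\<exists>g\<in>Fx. f = cc g")
        case True
        then obtain g where "g \<in> Fx" "f = cc g" by blast
        thus ?thesis using \<open>\<forall>f\<in>Fx. cc f = \<zero>\<close> by simp
      next
        case False
        then obtain g where g: "g \<in> Fx" "f = cc x0 \<oplus> cc g" using Fx_decomp[OF f] by blast
        hence "cc g = \<zero>" using \<open>\<forall>f\<in>Fx. cc f = \<zero>\<close> by simp
        thus ?thesis using g v0A by (simp add: v0_def)
      qed
    qed
    have sub: "Fx \<subseteq> {\<zero>, v0}" using Fall by auto
    have nz: "v0 \<noteq> \<zero>"
    proof
      assume "v0 = \<zero>" hence "Fx \<subseteq> {\<zero>}" using sub by auto
      hence "card Fx \<le> card {\<zero>}" by (rule card_mono[rotated]) simp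
      thus False using c2 by simp
    qed
    have FxE: "Fx = {\<zero>, v0}" using sub v0F zero_Fx by auto
    have cF: "card Fx = 2" using FxE nz by simp
    have ce: "cc v0 = \<zero>" using True v0F by blast
    have "x0 \<oplus> x0 = \<zero> \<or> x0 \<oplus> x0 = v0" using Fall w by blast
    thus ?thesis
    proof
      assume h: "x0 \<oplus> x0 = \<zero>"
      have "\<exists>xx e. xx \<in> Ob \<and> e \<in> Fx \<and> cc xx = e \<and> cc e = \<zero> \<and> xx \<oplus> xx = \<zero> \<and> (\<forall>f\<in>Fx. f = \<zero> \<or> f = e) \<and> card Fx = 2"
        apply (rule exI[of _ x0], rule exI[of _ v0])
        using x0_Ob v0F ce h Fall cF by (simp add: v0_def)
      thus ?thesis by blast
    next
      assume h: "x0 \<oplus> x0 = v0"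
      have "\<exists>xx e. xx \<in> Ob \<and> e \<in> Fx \<and> cc xx = e \<and> cc e = \<zero> \<and> xx \<oplus> xx = e \<and> (\<forall>f\<in>Fx. f = \<zero> \<or> f = e) \<and> card Fx = 2"
        apply (rule exI[of _ x0], rule exI[of _ v0])
        using x0_Ob v0F ce h Fall cF by (simp add: v0_def)
      thus ?thesis by blast
    qed
  next
    case False
    then obtain f1 where f1: "f1 \<in> Fx" "cc f1 \<noteq> \<zero>" by blast
    define u where "u = cc f1"
    have uF: "u \<in> Fx" using cc_Fx f1 Fx_A by (simp add: u_def)
    have uA: "u \<in> A" using uF Fx_A by blast
    have u0: "u \<noteq> \<zero>" using f1 by (simp add: u_def)
    have cu: "cc u = \<zero>" using cc_cc f1 by (simp add: u_def)
    have ccv0: "cc v0 = u"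
    proof (cases "\<exists>g\<in>Fx. f1 = cc g")
      case True
      then obtain g where "g \<in> Fx" "f1 = cc g" by blast
      hence "cc f1 = \<zero>" using cc_cc by simp
      thus ?thesis using f1 by simp
    next
      case False
      then obtain g where g: "g \<in> Fx" "f1 = v0 \<oplus> cc g" using Fx_decomp[OF f1(1)] by (auto simp: v0_def)
      have cgF: "cc g \<in> Fx" using cc_Fx g Fx_A by blast
      have "cc f1 = cc v0 \<oplus> cc (cc g)" using g cc_add[OF v0A cgF] by simp
      thus ?thesis using cc_cc[OF g(1)] v0A by (simp add: u_def)
    qed
    have cvals: "\<forall>f\<in>Fx. cc f = \<zero> \<or> cc f = u"
    proof
      fix f assume f: "f \<in> Fx"
      show "cc f = \<zero> \<or> cc f = u"
      proof (cases "\<exists>g\<in>Fx. f = cc g")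
        case True
        then obtain g where "g \<in> Fx" "f = cc g" by blast
        thus ?thesis using cc_cc by simp
      next
        case False
        then obtain g where g: "g \<in> Fx" "f = v0 \<oplus> cc g" using Fx_decomp[OF f] by (auto simp: v0_def)
        have cgF: "cc g \<in> Fx" using cc_Fx g Fx_A by blast
        have "cc f = cc v0 \<oplus> cc (cc g)" using g cc_add[OF v0A cgF] by simp
        thus ?thesis using cc_cc[OF g(1)] v0A ccv0 uA by simp
      qed
    qed
    have Fall0: "\<forall>f\<in>Fx. f = \<zero> \<or> f = u \<or> f = v0 \<or> f = v0 \<oplus> u"
    proof
      fix f assume f: "f \<in> Fx"
      show "f = \<zero> \<or> f = u \<or> f = v0 \<or> f = v0 \<oplus> u"
      proof (cases "\<exists>g\<in>Fx. f = cc g")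
        case True
        then obtain g where "g \<in> Fx" "f = cc g" by blast
        thus ?thesis using cvals by (auto simp: u_def)
      next
        case False
        then obtain g where g: "g \<in> Fx" "f = v0 \<oplus> cc g" using Fx_decomp[OF f] by (auto simp: v0_def)
        have "cc g = \<zero> \<or> cc g = u" using cvals g by blast
        thus ?thesis using g v0A by auto
      qed
    qed
    have vuF: "v0 \<oplus> u \<in> Fx" using add_Fx v0F uF by blast
    have cvu: "cc (v0 \<oplus> u) = u" using cc_add[OF v0A uF] ccv0 cu uA by simp
    have d1: "v0 \<noteq> \<zero>" using ccv0 u0 by auto
    have d2: "v0 \<noteq> u" using ccv0 cu u0 by auto
    have d3: "v0 \<oplus> u \<noteq> \<zero>" using cvu u0 by auto
    have d4: "v0 \<oplus> u \<noteq> u" using cvu cu u0 by auto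
    have d5: "v0 \<oplus> u \<noteq> v0" using u0 v0A uA by simp
    have FxE: "Fx = {\<zero>, u, v0, v0 \<oplus> u}" using Fall0 uF v0F vuF zero_Fx by blast
    have c4: "card Fx = 4" using FxE d1 d2 d3 d4 d5 u0 by (simp add: eq_commute)
    have vv: "v0 \<oplus> v0 = \<zero>" using Fx_two[OF v0F] .
    have uu: "u \<oplus> u = \<zero>" using Fx_two[OF uF] .
    have ox: "x0 \<odot> x0 = x0 \<oplus> x0 \<oplus> v0" using circ_O[OF x0_A x0_Ob] by (simp add: v0_def)
    have "cc (x0 \<odot> x0) = \<zero>" using cc_hom[OF x0_A x0_A] vv by (simp add: v0_def)
    hence cwv: "cc (x0 \<oplus> x0 \<oplus> v0) = \<zero>" using ox by simp
    have wvF: "x0 \<oplus> x0 \<oplus> v0 \<in> Fx" using add_Fx w v0F by blast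
    have "x0 \<oplus> x0 \<oplus> v0 = \<zero> \<or> x0 \<oplus> x0 \<oplus> v0 = u"
      using Fall0 wvF cwv ccv0 cvu u0 by force
    hence wcase: "x0 \<oplus> x0 = v0 \<or> x0 \<oplus> x0 = u \<oplus> v0"
    proof
      assume h: "x0 \<oplus> x0 \<oplus> v0 = \<zero>"
      have "x0 \<oplus> x0 = x0 \<oplus> x0 \<oplus> v0 \<oplus> v0" using vv wA v0A by (simp add: P.m_assoc)
      thus ?thesis using h v0A by simp
    next
      assume h: "x0 \<oplus> x0 \<oplus> v0 = u"
      have "x0 \<oplus> x0 = x0 \<oplus> x0 \<oplus> v0 \<oplus> v0" using vv wA v0A by (simp add: P.m_assoc)
      thus ?thesis using h by simp
    qed
    show ?thesis
    proof (cases "x0 \<oplus> x0 = v0")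
      case True
      have "\<exists>xx u. xx \<in> Ob \<and> u \<in> Fx \<and> u \<noteq> \<zero> \<and> cc u = \<zero> \<and> xx \<oplus> xx = cc xx \<and> cc (cc xx) = u \<and>
        (\<forall>f\<in>Fx. f = \<zero> \<or> f = u \<or> f = cc xx \<or> f = cc xx \<oplus> u) \<and> card Fx = 4"
        apply (rule exI[of _ x0], rule exI[of _ u])
        using x0_Ob uF u0 cu True ccv0 Fall0 c4 by (simp add: v0_def)
      thus ?thesis by blast
    next
      case False
      hence h: "x0 \<oplus> x0 = u \<oplus> v0" using wcase by blast
      define x1 where "x1 = x0 \<oplus> v0"
      have x1O: "x1 \<in> Ob" using Ob_shift[OF x0_Ob v0F] by (simp add: x1_def)
      have cx1: "cc x1 = v0 \<oplus> u" using cc_add[OF x0_A v0F] ccv0 by (simp add: x1_def v0_def)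
      have xx1: "x1 \<oplus> x1 = v0 \<oplus> u"
      proof -
        have "x1 \<oplus> x1 = (x0 \<oplus> x0) \<oplus> (v0 \<oplus> v0)" using v0A by (simp add: x1_def P.m_ac)
        thus ?thesis using h vv v0A uA by (simp add: P.m_comm)
      qed
      have F1: "\<forall>f\<in>Fx. f = \<zero> \<or> f = u \<or> f = v0 \<oplus> u \<or> f = v0 \<oplus> u \<oplus> u"
        using Fall0 uu v0A uA by (auto simp: P.m_assoc)
      have "\<exists>xx u. xx \<in> Ob \<and> u \<in> Fx \<and> u \<noteq> \<zero> \<and> cc u = \<zero> \<and> xx \<oplus> xx = cc xx \<and> cc (cc xx) = u \<and>
        (\<forall>f\<in>Fx. f = \<zero> \<or> f = u \<or> f = cc xx \<or> f = cc xx \<oplus> u) \<and> card Fx = 4"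
        apply (rule exI[of _ x1], rule exI[of _ u])
        using x1O uF u0 cu xx1 cx1 cvu F1 c4 by simp
      thus ?thesis by blast
    qed
  qed
qed

lemma main: "brace_iso P M B1_add B1_circ \<or> brace_iso P M B2_add B2_circ \<or> brace_iso P M B3_add B3_circ"
  using data
proof (elim disjE exE conjE)
  fix xx e assume "xx \<in> Ob" "e \<in> Fx" "cc xx = e" "cc e = \<zero>" "xx \<oplus> xx = e" "\<forall>f\<in>Fx. f = \<zero> \<or> f = e" "card Fx = 2"
  thus ?thesis using case1 by blast
next
  fix xx e assume "xx \<in> Ob" "e \<in> Fx" "cc xx = e" "cc e = \<zero>" "xx \<oplus> xx = \<zero>" "\<forall>f\<in>Fx. f = \<zero> \<or> f = e" "card Fx = 2"
  thus ?thesis using case2 by blast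
next
  fix xx u assume "xx \<in> Ob" "u \<in> Fx" "u \<noteq> \<zero>" "cc u = \<zero>" "xx \<oplus> xx = cc xx" "cc (cc xx) = u"
    "\<forall>f\<in>Fx. f = \<zero> \<or> f = u \<or> f = cc xx \<or> f = cc xx \<oplus> u" "card Fx = 4"
  thus ?thesis using case3 by blast
qed

end

theorem mainTheorem15:
  fixes P M :: "'a monoid"
  assumes "skew_brace P M"
    and "finite (carrier P)"
    and "comm_group P"
    and "card (Lambda_vertices P M) = 1"
  shows "brace_iso P M B1_add B1_circ \<or> brace_iso P M B2_add B2_circ \<or> brace_iso P M B3_add B3_circ"
proof -
  have "sbr P M" unfolding sbr_def using assms by (auto simp: skew_brace_def)
  thus ?thesis by (rule sbr.main)
qed

end
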